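(* Let $S$ be a species tree, $(T,\sigma)$ a gene tree, and $\mu:V(T)\to V(S)\cup E(S)$ a reconciliation map without horizontal gene transfer (satisfying (R0), (R1), (R2), (R3.i), (R3.ii)) that in addition satisfies axiom (R4). Let $x,y\in L(T)$ be two genes with $\sigma(x)\neq\sigma(y)$. If $\operatorname{lca}_S(\sigma(x),\sigma(y))\prec_S \mu(\operatorname{lca}_T(x,y))$, then $\operatorname{lca}_T(x,y)$ is a duplication event, i.e., $\mu(\operatorname{lca}_T(x,y))\in E(S)$.
   Context: A planted phylogenetic tree $T$ has a distinguished leaf $0_T$ (the planted root) whose unique neighbour $\rho_T$ is the root; every other non-leaf vertex has at least two children. $L(T)$ denotes the leaves other than $0_T$. For vertices, $a\preceq_T b$ means $b$ lies on the path from $a$ to $0_T$; $\operatorname{lca}_T(A)$ is the $\preceq_T$-minimal vertex that is $\succeq_T$ every element of $A$. A species tree $S$ is a planted phylogenetic tree with planted root $0_S$, root $\rho_S$ and leaf set $\mathscr{S}$ (the species); $V^0(S)$ denotes the inner vertices of $S$ (neither leaves nor $0_S$). The order $\preceq_S$ is extended to $V(S)\cup E(S)$ by regarding each edge $e=pq$ ($q$ a child of $p$) as lying strictly between $q$ and $p$: $q\prec_S e\prec_S p$, a vertex $w$ satisfies $w\prec_S e$ iff $w\preceq_S q$ and $e\prec_S w$ iff $p\preceq_S w$, and for edges $e=pq,e'=p'q'$, $e\prec_S e'$ iff $p\preceq_S q'$; $\operatorname{lca}_S$ of elements of $V(S)\cup E(S)$ is the $\preceq_S$-minimal vertex above all of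 them. A gene tree $(T,\sigma)$ is a planted phylogenetic tree with $\sigma:L(T)\to\mathscr{S}$. A reconciliation map without horizontal gene transfer is $\mu:V(T)\to V(S)\cup E(S)$ with: (R0) $\mu(v)=0_S$ iff $v=0_T$; (R1) $\mu(v)=\sigma(v)$ for $v\in L(T)$; (R2) $v\prec_T w\Rightarrow\mu(v)\preceq_S\mu(w)$; and for each $v$ with $\mu(v)\in V^0(S)$: (R3.i) $\mu(v)=\operatorname{lca}_S(\mu(v'),\mu(v''))$ for at least two distinct children $v',v''$ of $v$; (R3.ii) $\mu(v'),\mu(v'')$ are $\preceq_S$-incomparable for any two distinct children $v',v''$ of $v$. Axiom (R4): for leaves $x,y,z$ of $T$, if $\mu(\operatorname{lca}_T(x,y))=\mu(\operatorname{lca}_T(x,z))\in V^0(S)$ then $\operatorname{lca}_S(\sigma(x),\sigma(y))=\operatorname{lca}_S(\sigma(x),\sigma(z))$. A vertex $v$ of $T$ is a duplication if $\mu(v)\in E(S)$ and a speciation if $\mu(v)\in V^0(S)$. *)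

theory Defs
  imports Main
begin

text \<open>A rooted tree is given by a vertex set V, a set E of directed edges (p,q)
  with q a child of p, and a distinguished vertex r0 (the planted root 0_T),
  from which all edges point away.\<close>

definition children :: "('v \<times> 'v) set \<Rightarrow> 'v \<Rightarrow> 'v set" where
  "children E v = {w. (v, w) \<in> E}"

definition planted_phylo_tree :: "'v set \<Rightarrow> ('v \<times> 'v) set \<Rightarrow> 'v \<Rightarrow> bool" where
  "planted_phylo_tree V E r0 \<longleftrightarrow>
     finite V \<and> r0 \<in> V \<and> E \<subseteq> V \<times> V \<and> acyclic E \<and>
     (\<forall>v\<in>V. (r0, v) \<in> E\<^sup>*) \<and>
     (\<forall>v\<in>V. v \<noteq> r0 \<longrightarrow> (\<exists>!p. (p, v) \<in> E)) \<and>
     (\<forall>p. (p, r0) \<notin> E) \<and>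
     card (children E r0) = 1 \<and>
     (\<forall>v\<in>V. v \<noteq> r0 \<and> children E v \<noteq> {} \<longrightarrow> card (children E v) \<ge> 2)"

definition root_of :: "('v \<times> 'v) set \<Rightarrow> 'v \<Rightarrow> 'v" where
  "root_of E r0 = (THE v. (r0, v) \<in> E)"

definition leaves :: "'v set \<Rightarrow> ('v \<times> 'v) set \<Rightarrow> 'v \<Rightarrow> 'v set" where
  "leaves V E r0 = {v \<in> V. v \<noteq> r0 \<and> children E v = {}}"

definition inner :: "'v set \<Rightarrow> ('v \<times> 'v) set \<Rightarrow> 'v \<Rightarrow> 'v set" where
  "inner V E r0 = {v \<in> V. v \<noteq> r0 \<and> children E v \<noteq> {}}"

definition tle :: "('v \<times> 'v) set \<Rightarrow> 'v \<Rightarrow> 'v \<Rightarrow> bool" where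
  "tle E a b \<longleftrightarrow> (b, a) \<in> E\<^sup>*"

definition tless :: "('v \<times> 'v) set \<Rightarrow> 'v \<Rightarrow> 'v \<Rightarrow> bool" where
  "tless E a b \<longleftrightarrow> tle E a b \<and> a \<noteq> b"

definition lcaT :: "'v set \<Rightarrow> ('v \<times> 'v) set \<Rightarrow> 'v \<Rightarrow> 'v \<Rightarrow> 'v" where
  "lcaT V E x y = (THE v. v \<in> V \<and> tle E x v \<and> tle E y v \<and>
       (\<forall>w\<in>V. tle E x w \<and> tle E y w \<longrightarrow> tle E v w))"

text \<open>Elements of V(S) \<union> E(S).\<close>
datatype 'v elem = Vx 'v | Ed 'v 'v

definition is_elem :: "'v set \<Rightarrow> ('v \<times> 'v) set \<Rightarrow> 'v elem \<Rightarrow> bool" where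
  "is_elem V E a \<longleftrightarrow> (case a of Vx v \<Rightarrow> v \<in> V | Ed p q \<Rightarrow> (p, q) \<in> E)"

text \<open>The extended order \<preceq>_S on V(S) \<union> E(S); an edge (p,q) lies strictly between q and p.\<close>
fun ele :: "('v \<times> 'v) set \<Rightarrow> 'v elem \<Rightarrow> 'v elem \<Rightarrow> bool" where
  "ele E (Vx a) (Vx b) \<longleftrightarrow> tle E a b"
| "ele E (Vx w) (Ed p q) \<longleftrightarrow> tle E w q"
| "ele E (Ed p q) (Vx w) \<longleftrightarrow> tle E p w"
| "ele E (Ed p q) (Ed p' q') \<longleftrightarrow> (p = p' \<and> q = q') \<or> tle E p q'"

definition eless :: "('v \<times> 'v) set \<Rightarrow> 'v elem \<Rightarrow> 'v elem \<Rightarrow> bool" where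
  "eless E a b \<longleftrightarrow> ele E a b \<and> a \<noteq> b"

definition lcaS :: "'v set \<Rightarrow> ('v \<times> 'v) set \<Rightarrow> 'v elem \<Rightarrow> 'v elem \<Rightarrow> 'v" where
  "lcaS V E a b = (THE v. v \<in> V \<and> ele E a (Vx v) \<and> ele E b (Vx v) \<and>
       (\<forall>w\<in>V. ele E a (Vx w) \<and> ele E b (Vx w) \<longrightarrow> tle E v w))"

definition gene_tree ::
  "'g set \<Rightarrow> ('g \<times> 'g) set \<Rightarrow> 'g \<Rightarrow> ('g \<Rightarrow> 's) \<Rightarrow> 's set \<Rightarrow> ('s \<times> 's) set \<Rightarrow> 's \<Rightarrow> bool" where
  "gene_tree VT ET rT \<sigma> VS ES rS \<longleftrightarrow> planted_phylo_tree VT ET rT \<and>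
     (\<forall>v\<in>leaves VT ET rT. \<sigma> v \<in> leaves VS ES rS)"

definition reconciliation ::
  "'g set \<Rightarrow> ('g \<times> 'g) set \<Rightarrow> 'g \<Rightarrow> ('g \<Rightarrow> 's) \<Rightarrow>
   's set \<Rightarrow> ('s \<times> 's) set \<Rightarrow> 's \<Rightarrow> ('g \<Rightarrow> 's elem) \<Rightarrow> bool" where
  "reconciliation VT ET rT \<sigma> VS ES rS \<mu> \<longleftrightarrow>
     (\<forall>v\<in>VT. is_elem VS ES (\<mu> v)) \<and>
     (\<forall>v\<in>VT. \<mu> v = Vx rS \<longleftrightarrow> v = rT) \<and>
     (\<forall>v\<in>leaves VT ET rT. \<mu> v = Vx (\<sigma> v)) \<and>
     (\<forall>v\<in>VT. \<forall>w\<in>VT. tless ET v w \<longrightarrow> ele ES (\<mu> v) (\<mu> w)) \<and>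
     (\<forall>v\<in>VT. \<mu> v \<in> Vx ` inner VS ES rS \<longrightarrow>
        (\<exists>v'\<in>children ET v. \<exists>v''\<in>children ET v. v' \<noteq> v'' \<and>
            \<mu> v = Vx (lcaS VS ES (\<mu> v') (\<mu> v''))) \<and>
        (\<forall>v'\<in>children ET v. \<forall>v''\<in>children ET v. v' \<noteq> v'' \<longrightarrow>
            \<not> ele ES (\<mu> v') (\<mu> v'') \<and> \<not> ele ES (\<mu> v'') (\<mu> v')))"

definition axiom_R4 ::
  "'g set \<Rightarrow> ('g \<times> 'g) set \<Rightarrow> 'g \<Rightarrow> ('g \<Rightarrow> 's) \<Rightarrow>
   's set \<Rightarrow> ('s \<times> 's) set \<Rightarrow> 's \<Rightarrow> ('g \<Rightarrow> 's elem) \<Rightarrow> bool" where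
  "axiom_R4 VT ET rT \<sigma> VS ES rS \<mu> \<longleftrightarrow>
     (\<forall>x\<in>leaves VT ET rT. \<forall>y\<in>leaves VT ET rT. \<forall>z\<in>leaves VT ET rT.
        \<mu> (lcaT VT ET x y) = \<mu> (lcaT VT ET x z) \<and> \<mu> (lcaT VT ET x y) \<in> Vx ` inner VS ES rS
        \<longrightarrow> lcaS VS ES (Vx (\<sigma> x)) (Vx (\<sigma> y)) = lcaS VS ES (Vx (\<sigma> x)) (Vx (\<sigma> z)))"

definition duplication :: "('s \<times> 's) set \<Rightarrow> ('g \<Rightarrow> 's elem) \<Rightarrow> 'g \<Rightarrow> bool" where
  "duplication ES \<mu> v \<longleftrightarrow> (\<exists>p q. (p, q) \<in> ES \<and> \<mu> v = Ed p q)"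

end

theory Submission imports Defs begin

locale ppt =
  fixes V :: "'v set" and E :: "('v \<times> 'v) set" and r0 :: 'v
  assumes ppt: "planted_phylo_tree V E r0"
begin

lemma finV: "finite V" and r0V: "r0 \<in> V" and EV: "E \<subseteq> V \<times> V" and acyc: "acyclic E"
  and reach: "\<And>v. v \<in> V \<Longrightarrow> (r0, v) \<in> E\<^sup>*"
  and upar: "\<And>v. v \<in> V \<Longrightarrow> v \<noteq> r0 \<Longrightarrow> \<exists>!p. (p, v) \<in> E"
  and nopar: "\<And>p. (p, r0) \<notin> E"
  and card1: "card (children E r0) = 1"
  using ppt unfolding planted_phylo_tree_def by auto

lemma edge_V: "(a, b) \<in> E \<Longrightarrow> a \<in> V \<and> b \<in> V"
  using EV by auto

lemma rtr_V1: "(a, b) \<in> E\<^sup>* \<Longrightarrow> b \<in> V \<Longrightarrow> a \<in> V"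
  by (erule converse_rtranclE) (auto dest: edge_V)

lemma rtr_V2: "(a, b) \<in> E\<^sup>* \<Longrightarrow> a \<in> V \<Longrightarrow> b \<in> V"
  by (erule rtranclE) (auto dest: edge_V)

lemma par_unique: "(p, v) \<in> E \<Longrightarrow> (q, v) \<in> E \<Longrightarrow> p = q"
proof -
  assume a: "(p, v) \<in> E" "(q, v) \<in> E"
  then have "v \<in> V" "v \<noteq> r0" using edge_V nopar by auto
  then show ?thesis using upar a by blast
qed

lemma antisym: "(a, b) \<in> E\<^sup>* \<Longrightarrow> (b, a) \<in> E\<^sup>* \<Longrightarrow> a = b"
proof (rule ccontr)
  assume a: "(a, b) \<in> E\<^sup>*" "(b, a) \<in> E\<^sup>*" "a \<noteq> b"
  then have "(a, b) \<in> E\<^sup>+" by (meson rtranclD)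
  then have "(a, a) \<in> E\<^sup>+" using a(2) by (meson rtrancl_trancl_trancl trancl_rtrancl_trancl)
  then show False using acyc unfolding acyclic_def by blast
qed

lemma edge_back: "(a, b) \<in> E \<Longrightarrow> (b, a) \<in> E\<^sup>* \<Longrightarrow> False"
proof -
  assume a: "(a, b) \<in> E" "(b, a) \<in> E\<^sup>*"
  then have "a = b" using antisym by blast
  then show False using a acyc unfolding acyclic_def by blast
qed

lemma chain: "(a, v) \<in> E\<^sup>* \<Longrightarrow> (b, v) \<in> E\<^sup>* \<Longrightarrow> (a, b) \<in> E\<^sup>* \<or> (b, a) \<in> E\<^sup>*"
proof (induction arbitrary: b rule: rtrancl_induct)
  case base
  then show ?case by blast
next
  case (step u v' b)
  from step.prems show ?case
  proof (cases rule: rtranclE)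
    case base
    then show ?thesis using step by (meson rtrancl_into_rtrancl)
  next
    case (step p)
    then have "p = u" using par_unique \<open>(u, v') \<in> E\<close> by blast
    then have "(p, v') \<in> E" "(b, p) \<in> E\<^sup>*" using step(1,2) by auto
    then show ?thesis using step.IH \<open>p = u\<close> by blast
  qed
qed

lemma between: "(w, c) \<in> E \<Longrightarrow> (u, c) \<in> E\<^sup>* \<Longrightarrow> (w, u) \<in> E\<^sup>* \<Longrightarrow> u = c \<or> u = w"
proof -
  assume a: "(w, c) \<in> E" "(u, c) \<in> E\<^sup>*" "(w, u) \<in> E\<^sup>*"
  show ?thesis
  proof (cases "u = c")
    case False
    with a(2) obtain p where "(u, p) \<in> E\<^sup>*" "(p, c) \<in> E"
      by (metis rtranclE)
    then have "(u, w) \<in> E\<^sup>*" using par_unique a(1) by blast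
    then show ?thesis using antisym a(3) by blast
  qed simp
qed

lemma sibling: "(w, c1) \<in> E \<Longrightarrow> (w, c2) \<in> E \<Longrightarrow> (c1, c2) \<in> E\<^sup>* \<Longrightarrow> c1 = c2"
  using between[of w c2 c1] edge_back by blast

lemma wfc: "wf (E\<inverse>)"
proof -
  have "finite E" using finV EV by (meson finite_SigmaI finite_subset)
  then show ?thesis using acyc by (simp add: finite_acyclic_wf_converse)
qed

lemma child_towards0: "(w, s) \<in> E\<^sup>* \<Longrightarrow> w \<noteq> s \<Longrightarrow> \<exists>c. (w, c) \<in> E \<and> (c, s) \<in> E\<^sup>*"
  by (metis converse_rtranclE)

lemma exists_leaf: "u \<in> V \<Longrightarrow> u \<noteq> r0 \<Longrightarrow> \<exists>z\<in>leaves V E r0. (u, z) \<in> E\<^sup>*"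
proof -
  assume u: "u \<in> V" "u \<noteq> r0"
  obtain d where d: "d \<in> {d. (u, d) \<in> E\<^sup>*}" "\<And>y. (y, d) \<in> E\<inverse> \<Longrightarrow> y \<notin> {d. (u, d) \<in> E\<^sup>*}"
    using wfE_min[OF wfc, of u "{d. (u, d) \<in> E\<^sup>*}"] by blast
  have "children E d = {}"
    using d unfolding children_def by (auto intro: rtrancl_into_rtrancl)
  moreover have "d \<in> V" using d(1) u rtr_V2 by blast
  moreover have "d \<noteq> r0"
  proof
    assume "d = r0"
    then have "(u, r0) \<in> E\<^sup>*" using d by simp
    then show False using antisym reach u by blast
  qed
  ultimately show ?thesis using d(1) unfolding leaves_def by blast
qed

lemma lca_exists: "a \<in> V \<Longrightarrow> b \<in> V \<Longrightarrow>
  \<exists>v\<in>V. (v, a) \<in> E\<^sup>* \<and> (v, b) \<in> E\<^sup>* \<and> (\<forall>u\<in>V. (u, a) \<in> E\<^sup>* \<and> (u, b) \<in> E\<^sup>* \<longrightarrow> (u, v) \<in> E\<^sup>*)"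
proof -
  assume ab: "a \<in> V" "b \<in> V"
  define A where "A = {v\<in>V. (v, a) \<in> E\<^sup>* \<and> (v, b) \<in> E\<^sup>*}"
  have "r0 \<in> A" unfolding A_def using r0V reach ab by simp
  obtain v where v: "v \<in> A" and vmin: "\<And>y. (y, v) \<in> E\<inverse> \<Longrightarrow> y \<notin> A"
    using wfE_min[OF wfc \<open>r0 \<in> A\<close>] by metis
  have vA: "v \<in> V" "(v, a) \<in> E\<^sup>*" "(v, b) \<in> E\<^sup>*" using v unfolding A_def by simp_all
  have "(u, v) \<in> E\<^sup>*" if u: "u \<in> V" "(u, a) \<in> E\<^sup>*" "(u, b) \<in> E\<^sup>*" for u
  proof -
    have "(u, v) \<in> E\<^sup>* \<or> (v, u) \<in> E\<^sup>*" using u(2) vA(2) by (rule chain)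
    moreover have False if vu: "(v, u) \<in> E\<^sup>*" "v \<noteq> u"
    proof -
      obtain c where c: "(v, c) \<in> E" "(c, u) \<in> E\<^sup>*" using child_towards0[OF vu] by blast
      have "(c, a) \<in> E\<^sup>*" using c(2) u(2) by (rule rtrancl_trans)
      moreover have "(c, b) \<in> E\<^sup>*" using c(2) u(3) by (rule rtrancl_trans)
      moreover have "c \<in> V" using c(1) edge_V by blast
      ultimately have "c \<in> A" unfolding A_def by simp
      moreover have "(c, v) \<in> E\<inverse>" using c(1) by simp
      ultimately show False using vmin by blast
    qed
    ultimately show ?thesis by blast
  qed
  then show ?thesis using vA by blast
qed

lemma lcaT_props: assumes "a \<in> V" "b \<in> V"
  shows "lcaT V E a b \<in> V \<and> (lcaT V E a b, a) \<in> E\<^sup>* \<and> (lcaT V E a b, b) \<in> E\<^sup>* \<and>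
    (\<forall>u\<in>V. (u, a) \<in> E\<^sup>* \<and> (u, b) \<in> E\<^sup>* \<longrightarrow> (u, lcaT V E a b) \<in> E\<^sup>*)"
proof -
  obtain v where v: "v\<in>V" "(v, a) \<in> E\<^sup>*" "(v, b) \<in> E\<^sup>*"
    "\<forall>u\<in>V. (u, a) \<in> E\<^sup>* \<and> (u, b) \<in> E\<^sup>* \<longrightarrow> (u, v) \<in> E\<^sup>*"
    using lca_exists[OF assms] by blast
  have "lcaT V E a b = v"
    unfolding lcaT_def tle_def
  proof (rule the_equality)
    fix m assume m: "m \<in> V \<and> (m, a) \<in> E\<^sup>* \<and> (m, b) \<in> E\<^sup>* \<and>
       (\<forall>w\<in>V. (w, a) \<in> E\<^sup>* \<and> (w, b) \<in> E\<^sup>* \<longrightarrow> (w, m) \<in> E\<^sup>*)"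
    then have "(v, m) \<in> E\<^sup>*" using v by blast
    moreover have "(m, v) \<in> E\<^sup>*" using m v(4) by blast
    ultimately show "m = v" using antisym by blast
  qed (use v in blast)
  then show ?thesis using v by simp
qed

lemma child_towards: "(w, s) \<in> E\<^sup>* \<Longrightarrow> w \<noteq> s \<Longrightarrow> \<exists>c. (w, c) \<in> E \<and> (c, s) \<in> E\<^sup>*"
  by (metis converse_rtranclE)

lemma lca_char: assumes "v \<in> V" "(v, c1) \<in> E" "(v, c2) \<in> E" "c1 \<noteq> c2"
    "(c1, a) \<in> E\<^sup>*" "(c2, b) \<in> E\<^sup>*"
  shows "lcaT V E a b = v"
proof -
  have "c1 \<in> V" "c2 \<in> V" using assms(2,3) edge_V by auto
  then have ab: "a \<in> V" "b \<in> V" using assms(5,6) rtr_V2 by auto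
  define m where "m = lcaT V E a b"
  have m: "m \<in> V" "(m, a) \<in> E\<^sup>*" "(m, b) \<in> E\<^sup>*"
    "\<forall>u\<in>V. (u, a) \<in> E\<^sup>* \<and> (u, b) \<in> E\<^sup>* \<longrightarrow> (u, m) \<in> E\<^sup>*"
    using lcaT_props[OF ab] unfolding m_def by blast+
  have "(v, a) \<in> E\<^sup>*" "(v, b) \<in> E\<^sup>*" using assms(2,3,5,6) by (meson converse_rtrancl_into_rtrancl)+
  then have vm: "(v, m) \<in> E\<^sup>*" using m(4) assms(1) by blast
  have h1: "m = v \<or> (c1, m) \<in> E\<^sup>*"
  proof -
    have "(m, c1) \<in> E\<^sup>* \<or> (c1, m) \<in> E\<^sup>*" using chain[OF m(2) assms(5)] .
    then show ?thesis using between[OF assms(2) _ vm] by auto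
  qed
  have h2: "m = v \<or> (c2, m) \<in> E\<^sup>*"
  proof -
    have "(m, c2) \<in> E\<^sup>* \<or> (c2, m) \<in> E\<^sup>*" using chain[OF m(3) assms(6)] .
    then show ?thesis using between[OF assms(3) _ vm] by auto
  qed
  show ?thesis
  proof (rule ccontr)
    assume "lcaT V E a b \<noteq> v"
    then have "(c1, m) \<in> E\<^sup>*" "(c2, m) \<in> E\<^sup>*" using h1 h2 m_def by auto
    then have "(c1, c2) \<in> E\<^sup>* \<or> (c2, c1) \<in> E\<^sup>*" using chain by blast
    then show False using sibling assms by blast
  qed
qed


end

fun top :: "'v elem \<Rightarrow> 'v" where
  "top (Vx v) = v" | "top (Ed p q) = p"

lemma ele_Vx_right: "ele E a (Vx w) = tle E (top a) w"
  by (cases a) auto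

lemma lcaS_eq: "lcaS V E a b = lcaT V E (top a) (top b)"
  unfolding lcaS_def lcaT_def ele_Vx_right by simp

lemma ele_refl: "ele E a a"
  by (cases a) (auto simp: tle_def)

lemma E3: "ele E a (Ed w c) \<Longrightarrow> a = Ed w c \<or> tle E (top a) c"
  by (cases a) auto

lemma top_V: "is_elem V E a \<Longrightarrow> ppt V E r0 \<Longrightarrow> top a \<in> V"
  by (cases a) (auto simp: is_elem_def dest: ppt.edge_V)

context ppt
begin

lemma E4: assumes "is_elem V E a" "ele E (Vx s) a" "ele E a (Vx w)" "a \<noteq> Vx w"
    "(w, c) \<in> E" "tle E s c"
  shows "ele E a (Ed w c)"
proof (cases a)
  case (Vx u)
  then have "(u, s) \<in> E\<^sup>*" "(w, u) \<in> E\<^sup>*" "u \<noteq> w" "(c, s) \<in> E\<^sup>*"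
    using assms by (auto simp: tle_def)
  then have "(u, c) \<in> E\<^sup>* \<or> (c, u) \<in> E\<^sup>*" using chain by blast
  then have "(c, u) \<in> E\<^sup>*" using between[OF assms(5) _ \<open>(w, u) \<in> E\<^sup>*\<close>] \<open>u \<noteq> w\<close> by auto
  then show ?thesis using Vx by (simp add: tle_def)
next
  case (Ed p q)
  then have pq: "(p, q) \<in> E" "(q, s) \<in> E\<^sup>*" "(w, p) \<in> E\<^sup>*" "(c, s) \<in> E\<^sup>*"
    using assms by (auto simp: tle_def is_elem_def)
  have wq: "(w, q) \<in> E\<^sup>*" using pq(3) pq(1) by (rule rtrancl_into_rtrancl)
  have "q \<noteq> w" using pq(1,3) edge_back by blast
  have "(q, c) \<in> E\<^sup>* \<or> (c, q) \<in> E\<^sup>*" using chain pq by blast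
  moreover have "q = c \<or> (c, q) \<in> E\<^sup>*" if "(q, c) \<in> E\<^sup>*"
    using between[OF assms(5) that wq] \<open>q \<noteq> w\<close> by auto
  ultimately have "q = c \<or> (c, q) \<in> E\<^sup>*" by blast
  then show ?thesis
  proof
    assume "q = c"
    then have "p = w" using pq(1) assms(5) par_unique by blast
    then show ?thesis using Ed \<open>q = c\<close> by simp
  next
    assume cq: "(c, q) \<in> E\<^sup>*"
    show ?thesis
    proof (cases "c = q")
      case True
      then have "p = w" using pq(1) assms(5) par_unique by blast
      then show ?thesis using Ed True by simp
    next
      case False
      then obtain p' where "(c, p') \<in> E\<^sup>*" "(p', q) \<in> E" using cq by (metis rtranclE)
      then have "(c, p) \<in> E\<^sup>*" using par_unique pq(1) by blast
      then show ?thesis using Ed by (simp add: tle_def)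
    qed
  qed
qed

lemma E5: assumes "is_elem V E a" "ele E (Vx s) a" "ele E a (Vx w)" "a \<noteq> Vx w"
  shows "(w, s) \<in> E\<^sup>* \<and> s \<noteq> w"
proof (cases a)
  case (Vx u)
  then have "(u, s) \<in> E\<^sup>*" "(w, u) \<in> E\<^sup>*" "u \<noteq> w"
    using assms by (auto simp: tle_def)
  then show ?thesis using antisym rtrancl_trans by metis
next
  case (Ed p q)
  then have pq: "(p, q) \<in> E" "(q, s) \<in> E\<^sup>*" "(w, p) \<in> E\<^sup>*"
    using assms by (auto simp: tle_def is_elem_def)
  have wq: "(w, q) \<in> E\<^sup>*" using pq(3) pq(1) by (rule rtrancl_into_rtrancl)
  have ws: "(w, s) \<in> E\<^sup>*" using wq pq(2) by (rule rtrancl_trans)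
  have "s \<noteq> w"
  proof
    assume "s = w"
    then have "(q, p) \<in> E\<^sup>*" using pq(2,3) by (metis rtrancl_trans)
    then show False using pq(1) edge_back by blast
  qed
  then show ?thesis using ws by blast
qed

end

theorem lemma3:
  fixes VT :: "'g set" and ET :: "('g \<times> 'g) set" and rT :: 'g
    and VS :: "'s set" and ES :: "('s \<times> 's) set" and rS :: 's
    and \<sigma> :: "'g \<Rightarrow> 's" and \<mu> :: "'g \<Rightarrow> 's elem" and x y :: 'g
  assumes "planted_phylo_tree VS ES rS"
    and "gene_tree VT ET rT \<sigma> VS ES rS"
    and "reconciliation VT ET rT \<sigma> VS ES rS \<mu>"
    and "axiom_R4 VT ET rT \<sigma> VS ES rS \<mu>"
    and "x \<in> leaves VT ET rT" and "y \<in> leaves VT ET rT"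
    and "\<sigma> x \<noteq> \<sigma> y"
    and "eless ES (Vx (lcaS VS ES (Vx (\<sigma> x)) (Vx (\<sigma> y)))) (\<mu> (lcaT VT ET x y))"
  shows "duplication ES \<mu> (lcaT VT ET x y)"
proof (rule ccontr)
  assume nd: "\<not> duplication ES \<mu> (lcaT VT ET x y)"
  interpret S: ppt VS ES rS using assms(1) by (simp add: ppt_def)
  interpret T: ppt VT ET rT using assms(2) by (simp add: ppt_def gene_tree_def)
  have Rel: "\<And>v. v\<in>VT \<Longrightarrow> is_elem VS ES (\<mu> v)"
    and R0: "\<And>v. v\<in>VT \<Longrightarrow> \<mu> v = Vx rS \<longleftrightarrow> v = rT"
    and R1: "\<And>v. v\<in>leaves VT ET rT \<Longrightarrow> \<mu> v = Vx (\<sigma> v)"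
    and R2: "\<And>v w. v\<in>VT \<Longrightarrow> w\<in>VT \<Longrightarrow> tless ET v w \<Longrightarrow> ele ES (\<mu> v) (\<mu> w)"
    using assms(3) unfolding reconciliation_def by blast+
  have R3: "\<And>v. v\<in>VT \<Longrightarrow> \<mu> v \<in> Vx ` inner VS ES rS \<Longrightarrow>
        (\<exists>v'\<in>children ET v. \<exists>v''\<in>children ET v. v' \<noteq> v'' \<and>
            \<mu> v = Vx (lcaS VS ES (\<mu> v') (\<mu> v''))) \<and>
        (\<forall>v'\<in>children ET v. \<forall>v''\<in>children ET v. v' \<noteq> v'' \<longrightarrow>
            \<not> ele ES (\<mu> v') (\<mu> v'') \<and> \<not> ele ES (\<mu> v'') (\<mu> v'))"
    using assms(3) unfolding reconciliation_def by blast
  have sig: "\<And>z. z \<in> leaves VT ET rT \<Longrightarrow> \<sigma> z \<in> VS"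
    using assms(2) unfolding gene_tree_def leaves_def by blast
  have xL: "x \<in> VT" "children ET x = {}" and yL: "y \<in> VT" "children ET y = {}"
    using assms(5,6) unfolding leaves_def by auto
  define v where "v = lcaT VT ET x y"
  have v: "v \<in> VT" "(v, x) \<in> ET\<^sup>*" "(v, y) \<in> ET\<^sup>*"
    and vmin: "\<forall>u\<in>VT. (u, x) \<in> ET\<^sup>* \<and> (u, y) \<in> ET\<^sup>* \<longrightarrow> (u, v) \<in> ET\<^sup>*"
    using T.lcaT_props[OF xL(1) yL(1)] unfolding v_def by blast+
  have "x \<noteq> v"
  proof
    assume "x = v"
    then have "(x, y) \<in> ET\<^sup>*" using v by simp
    then have "y = x" using xL(2) unfolding children_def by (auto elim: converse_rtranclE)
    then show False using assms(7) by simp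
  qed
  have "y \<noteq> v"
  proof
    assume "y = v"
    then have "(y, x) \<in> ET\<^sup>*" using v by simp
    then have "y = x" using yL(2) unfolding children_def by (auto elim: converse_rtranclE)
    then show False using assms(7) by simp
  qed
  obtain vx where vx: "(v, vx) \<in> ET" "(vx, x) \<in> ET\<^sup>*"
    using T.child_towards0[OF v(2)] \<open>x \<noteq> v\<close> by metis
  obtain vy where vy: "(v, vy) \<in> ET" "(vy, y) \<in> ET\<^sup>*"
    using T.child_towards0[OF v(3)] \<open>y \<noteq> v\<close> by metis
  have "vx \<noteq> vy"
  proof
    assume "vx = vy"
    then have "(vx, v) \<in> ET\<^sup>*" using vmin vx vy T.edge_V by blast
    then show False using T.edge_back vx(1) by blast
  qed
  have "v \<noteq> rT"
  proof
    assume "v = rT"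
    then have "vx \<in> children ET rT" "vy \<in> children ET rT" using vx vy unfolding children_def by auto
    then show False using T.card1 \<open>vx \<noteq> vy\<close> by (metis card_1_singletonE singletonD)
  qed
  obtain w where w: "\<mu> v = Vx w" "w \<in> VS"
  proof (cases "\<mu> v")
    case (Vx w)
    then show ?thesis using that Rel[OF v(1)] by (simp add: is_elem_def)
  next
    case (Ed p q)
    then have "duplication ES \<mu> v" using Rel[OF v(1)] by (simp add: is_elem_def duplication_def)
    then show ?thesis using nd v_def by simp
  qed
  define l where "l = lcaS VS ES (Vx (\<sigma> x)) (Vx (\<sigma> y))"
  have sx: "\<sigma> x \<in> VS" "\<sigma> y \<in> VS" using sig assms(5,6) by auto
  have "l = lcaT VS ES (\<sigma> x) (\<sigma> y)" unfolding l_def lcaS_eq by simp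
  then have l: "(l, \<sigma> x) \<in> ES\<^sup>*" "(l, \<sigma> y) \<in> ES\<^sup>*" using S.lcaT_props[OF sx] by simp_all
  have wl: "(w, l) \<in> ES\<^sup>*" "l \<noteq> w"
    using assms(8) unfolding v_def[symmetric] l_def[symmetric] w(1) eless_def by (auto simp: tle_def)
  obtain c0 where c0: "(w, c0) \<in> ES" "(c0, l) \<in> ES\<^sup>*"
    using S.child_towards0[OF wl(1)] wl(2) by metis
  have c0x: "(c0, \<sigma> x) \<in> ES\<^sup>*" "(c0, \<sigma> y) \<in> ES\<^sup>*" using c0(2) l by (meson rtrancl_trans)+
  have "w \<noteq> rS" using R0[OF v(1)] \<open>v \<noteq> rT\<close> w(1) by auto
  have winner: "\<mu> v \<in> Vx ` inner VS ES rS"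
    using w \<open>w \<noteq> rS\<close> c0(1) unfolding inner_def children_def by auto
  obtain v' v'' where vv: "v'\<in>children ET v" "v''\<in>children ET v" "v' \<noteq> v''"
      "\<mu> v = Vx (lcaS VS ES (\<mu> v') (\<mu> v''))"
    using R3[OF v(1) winner] by blast
  have inc: "\<And>a b. a\<in>children ET v \<Longrightarrow> b\<in>children ET v \<Longrightarrow> a \<noteq> b \<Longrightarrow> \<not> ele ES (\<mu> a) (\<mu> b)"
    using R3[OF v(1) winner] by blast
  have ch1: "c \<in> VT \<and> is_elem VS ES (\<mu> c) \<and> ele ES (\<mu> c) (Vx w)" if c: "c\<in>children ET v" for c
  proof -
    have cE: "(v, c) \<in> ET" using c unfolding children_def by simp
    then have cV: "c \<in> VT" using T.edge_V by blast
    have "c \<noteq> v" using cE T.edge_back by blast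
    then have "tless ET c v" using cE unfolding tless_def tle_def by auto
    then have "ele ES (\<mu> c) (\<mu> v)" using R2 cV v(1) by blast
    then show ?thesis using cV Rel w(1) by simp
  qed
  have ch2: "\<mu> c \<noteq> Vx w" if c: "c\<in>children ET v" for c
  proof
    assume cw: "\<mu> c = Vx w"
    obtain d where d: "d \<in> children ET v" "d \<noteq> c" using vv by blast
    then have "ele ES (\<mu> d) (\<mu> c)" using ch1 cw by simp
    then show False using inc d c by blast
  qed
  have lf: "ele ES (Vx (\<sigma> z)) (\<mu> c)"
    if z: "z \<in> leaves VT ET rT" "c \<in> children ET v" "(c, z) \<in> ET\<^sup>*" for z c
  proof (cases "c = z")
    case True
    then show ?thesis using R1 z(1) ele_refl by metis
  next
    case False
    have "z \<in> VT" using z(1) unfolding leaves_def by simp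
    moreover have "tless ET z c" using z(3) False unfolding tless_def tle_def by auto
    ultimately have "ele ES (\<mu> z) (\<mu> c)" using R2 ch1 z(2) by blast
    then show ?thesis using R1 z(1) by simp
  qed
  have vxc: "vx \<in> children ET v" "vy \<in> children ET v" using vx vy unfolding children_def by auto
  have Ex: "ele ES (\<mu> vx) (Ed w c0)"
    using S.E4[of "\<mu> vx" "\<sigma> x" w c0] ch1 ch2 vxc lf assms(5) vx c0 c0x by (simp add: tle_def)
  have Ey: "ele ES (\<mu> vy) (Ed w c0)"
    using S.E4[of "\<mu> vy" "\<sigma> y" w c0] ch1 ch2 vxc lf assms(6) vy c0 c0x by (simp add: tle_def)
  have "\<exists>vs\<in>children ET v. \<not> ele ES (\<mu> vs) (Ed w c0)"
  proof (rule ccontr)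
    assume "\<not> ?thesis"
    then have a1: "ele ES (\<mu> v') (Ed w c0)" "ele ES (\<mu> v'') (Ed w c0)" using vv(1,2) by auto
    have n1: "\<mu> v' \<noteq> Ed w c0"
    proof
      assume "\<mu> v' = Ed w c0"
      then have "ele ES (\<mu> v'') (\<mu> v')" using a1 by simp
      then show False using inc[OF vv(2) vv(1)] vv(3) by blast
    qed
    have n2: "\<mu> v'' \<noteq> Ed w c0"
    proof
      assume "\<mu> v'' = Ed w c0"
      then have "ele ES (\<mu> v') (\<mu> v'')" using a1 by simp
      then show False using inc[OF vv(1) vv(2) vv(3)] by blast
    qed
    have t: "(c0, top (\<mu> v')) \<in> ES\<^sup>*" "(c0, top (\<mu> v'')) \<in> ES\<^sup>*"
      using E3[OF a1(1)] E3[OF a1(2)] n1 n2 unfolding tle_def by auto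
    have tV: "top (\<mu> v') \<in> VS" "top (\<mu> v'') \<in> VS"
      using top_V[OF _ S.ppt_axioms] ch1[OF vv(1)] ch1[OF vv(2)] by auto
    have "w = lcaT VS ES (top (\<mu> v')) (top (\<mu> v''))" using vv(4) w(1) lcaS_eq by simp
    moreover have "c0 \<in> VS" using c0(1) S.edge_V by blast
    ultimately have "(c0, w) \<in> ES\<^sup>*" using S.lcaT_props[OF tV] t by simp
    then show False using S.edge_back c0(1) by blast
  qed
  then obtain vs where vs: "vs \<in> children ET v" "\<not> ele ES (\<mu> vs) (Ed w c0)" by blast
  have "vs \<noteq> vx" using vs Ex by blast
  have vsE: "(v, vs) \<in> ET" using vs unfolding children_def by simp
  have "vs \<in> VT" "vs \<noteq> rT" using vsE T.edge_V T.nopar by blast+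
  then obtain z where z: "z \<in> leaves VT ET rT" "(vs, z) \<in> ET\<^sup>*" using T.exists_leaf by blast
  have lxz: "lcaT VT ET x z = v"
    using T.lca_char[OF v(1) vx(1) vsE] \<open>vs \<noteq> vx\<close> vx(2) z(2) by metis
  have sz: "ele ES (Vx (\<sigma> z)) (\<mu> vs)" using lf z vs by blast
  have wsz: "(w, \<sigma> z) \<in> ES\<^sup>*" "\<sigma> z \<noteq> w"
    using S.E5[OF _ sz, of w] ch1 ch2 vs by blast+
  obtain c1 where c1: "(w, c1) \<in> ES" "(c1, \<sigma> z) \<in> ES\<^sup>*"
    using S.child_towards0[OF wsz(1)] wsz(2) by metis
  have "c0 \<noteq> c1"
  proof
    assume "c0 = c1"
    then have "ele ES (\<mu> vs) (Ed w c0)"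
      using S.E4[of "\<mu> vs" "\<sigma> z" w c0] ch1 ch2 vs sz c1 by (simp add: tle_def)
    then show False using vs by blast
  qed
  have lw: "lcaT VS ES (\<sigma> x) (\<sigma> z) = w"
    using S.lca_char[OF w(2) c0(1) c1(1) \<open>c0 \<noteq> c1\<close> c0x(1) c1(2)] .
  have "\<mu> (lcaT VT ET x y) = \<mu> (lcaT VT ET x z) \<and> \<mu> (lcaT VT ET x y) \<in> Vx ` inner VS ES rS"
    using lxz winner v_def by simp
  have "lcaS VS ES (Vx (\<sigma> x)) (Vx (\<sigma> y)) = lcaS VS ES (Vx (\<sigma> x)) (Vx (\<sigma> z))"
  proof -
    have "\<forall>x\<in>leaves VT ET rT. \<forall>y\<in>leaves VT ET rT. \<forall>z\<in>leaves VT ET rT.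
        \<mu> (lcaT VT ET x y) = \<mu> (lcaT VT ET x z) \<and> \<mu> (lcaT VT ET x y) \<in> Vx ` inner VS ES rS
        \<longrightarrow> lcaS VS ES (Vx (\<sigma> x)) (Vx (\<sigma> y)) = lcaS VS ES (Vx (\<sigma> x)) (Vx (\<sigma> z))"
      using assms(4) unfolding axiom_R4_def .
    then show ?thesis using assms(5,6) z(1) \<open>\<mu> (lcaT VT ET x y) = _ \<and> _\<close> by blast
  qed
  then have "l = w" using lw unfolding l_def lcaS_eq by simp
  then show False using wl(2) by simp
qed

end
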